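(* Consider the online ADDIS setting described in the context, and assume the predictable sequences satisfy $\tau_j>\lambda_j\ge\alpha_j$ for every $j\in\mathbb N$. (a) If the null $p$-values are conditionally uniformly conservative, then any procedure with $\widehat{\mathrm{FDP}}_{\mathrm{ADDIS}}(t)\le\alpha$ for all $t\in\mathbb N$ (almost surely) satisfies $\mathrm{mFDR}(t)\le\alpha$ for all $t\in\mathbb N$. (b) If in addition the null $p$-values are independent of each other and of the non-null $p$-values, and for every $t$ the quantities $\alpha_t$, $\lambda_t$ and $1-\tau_t$ are monotonic functions of the past, then any procedure with $\widehat{\mathrm{FDP}}_{\mathrm{ADDIS}}(t)\le\alpha$ for all $t\in\mathbb N$ satisfies $\mathrm{FDR}(t)\le\alpha$ for all $t\in\mathbb N$.
   Context: Let $P_1,P_2,\dots$ be $p$-values for hypotheses $H_1,H_2,\dots$, and let $\mathcal H_0\subseteq\mathbb N$ be the (fixed, unknown) set of indices of true null hypotheses. Fix a target level $\alpha\in(0,1)$. An online procedure uses sequences $\{\alpha_j\},\{\lambda_j\},\{\tau_j\}$ with values in $[0,1]$ and defines indicators $S_j=\mathbf 1\{P_j\le\tau_j\}$, $C_j=\mathbf 1\{P_j\le\lambda_j\}$, $R_j=\mathbf 1\{P_j\le\alpha_j\}$ ($H_j$ is rejected iff $R_j=1$), and $R(t)=\{j\le t:R_j=1\}$. Let $\mathcal F^t=\sigma(R_{1:t},C_{1:t},S_{1:t})$ (with $\mathcal F^0$ trivial). The sequences are predictable: $\alpha_t,\lambda_t,\tau_t$ are $\mathcal F^{t-1}$-measurable,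 i.e. deterministic functions of $(R_{1:t-1},C_{1:t-1},S_{1:t-1})$. The null $p$-values are (conditionally) uniformly conservative if for every $t\in\mathcal H_0$ and all $x,\tau\in(0,1)$, $\Pr(P_t/\tau\le x\mid P_t\le\tau,\mathcal F^{t-1})\le x$ (equivalently, the conditional CDF $F$ of $P_t$ given $\mathcal F^{t-1}$ satisfies $F(\tau x)\le xF(\tau)$ for all $x,\tau\in[0,1]$). Define $$\widehat{\mathrm{FDP}}_{\mathrm{ADDIS}}(t)=\frac{\sum_{j\le t}\alpha_j\frac{\mathbf 1\{\lambda_j<P_j\le\tau_j\}}{\tau_j-\lambda_j}}{|R(t)|\vee1},$$ $\mathrm{FDR}(t)=\mathbb E\big[\frac{|\mathcal H_0\cap R(t)|}{|R(t)|\vee1}\big]$ and $\mathrm{mFDR}(t)=\frac{\mathbb E[|\mathcal H_0\cap R(t)|]}{\mathbb E[|R(t)|\vee1]}$. A function $f_t(R_{1:t-1},C_{1:t-1},S_{1:t-1}):\{0,1\}^{3(t-1)}\to[0,1]$ is a monotonic function of the past if it is coordinatewise nondecreasing in each $R_i$ and each $C_i$ and coordinatewise nonincreasing in each $S_i$. *)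

theory Defs
  imports "HOL-Probability.Probability"
begin

text \<open>Hypotheses are indexed by 1, 2, 3, ...
  A history of length n is the list of triples (R_j, C_j, S_j) for j = 1..n.
  A predictable sequence (alpha_t, lambda_t or tau_t) is given by a single function
  on histories: the value at time t is the function applied to the history of
  length t - 1 (so the time index t is the length of the argument plus one).\<close>

type_synonym hist = "(bool \<times> bool \<times> bool) list"

fun history :: "(nat \<Rightarrow> 'a \<Rightarrow> real) \<Rightarrow> (hist \<Rightarrow> real) \<Rightarrow> (hist \<Rightarrow> real) \<Rightarrow> (hist \<Rightarrow> real)
    \<Rightarrow> 'a \<Rightarrow> nat \<Rightarrow> hist" where
  "history P af lf tf \<omega> 0 = []"
| "history P af lf tf \<omega> (Suc n) =
     (let h = history P af lf tf \<omega> n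
      in h @ [(P (Suc n) \<omega> \<le> af h, P (Suc n) \<omega> \<le> lf h, P (Suc n) \<omega> \<le> tf h)])"

definition alphaj where "alphaj P af lf tf j \<omega> = af (history P af lf tf \<omega> (j - 1))"
definition lamj where "lamj P af lf tf j \<omega> = lf (history P af lf tf \<omega> (j - 1))"
definition tauj where "tauj P af lf tf j \<omega> = tf (history P af lf tf \<omega> (j - 1))"

definition Rset :: "(nat \<Rightarrow> 'a \<Rightarrow> real) \<Rightarrow> (hist \<Rightarrow> real) \<Rightarrow> (hist \<Rightarrow> real) \<Rightarrow> (hist \<Rightarrow> real)
    \<Rightarrow> nat \<Rightarrow> 'a \<Rightarrow> nat set" where
  "Rset P af lf tf t \<omega> = {j \<in> {1..t}. P j \<omega> \<le> alphaj P af lf tf j \<omega>}"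

definition FDPhat_ADDIS where
  "FDPhat_ADDIS P af lf tf t \<omega> =
     (\<Sum>j\<in>{1..t}. alphaj P af lf tf j \<omega> *
         (if lamj P af lf tf j \<omega> < P j \<omega> \<and> P j \<omega> \<le> tauj P af lf tf j \<omega> then 1 else 0)
         / (tauj P af lf tf j \<omega> - lamj P af lf tf j \<omega>))
     / max (real (card (Rset P af lf tf t \<omega>))) 1"

definition FDR where
  "FDR M P H0 af lf tf t =
     (\<integral>\<omega>. real (card (H0 \<inter> Rset P af lf tf t \<omega>)) / max (real (card (Rset P af lf tf t \<omega>))) 1 \<partial>M)"

definition mFDR where
  "mFDR M P H0 af lf tf t =
     (\<integral>\<omega>. real (card (H0 \<inter> Rset P af lf tf t \<omega>)) \<partial>M)
     / (\<integral>\<omega>. max (real (card (Rset P af lf tf t \<omega>))) 1 \<partial>M)"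

text \<open>F^{t-1} is generated by the finite-valued
  history of length t-1, so conditioning on F^{t-1} is conditioning on each atom
  {history = h}; the condition F(tau x) \<le> x F(tau) for the conditional CDF is
  stated multiplied through by Pr(history = h) (atoms of probability zero impose
  no constraint).\<close>
definition cond_unif_conservative where
  "cond_unif_conservative M P H0 af lf tf \<longleftrightarrow>
     (\<forall>t\<in>H0. \<forall>h. \<forall>x\<in>{0..1}. \<forall>s\<in>{0..1}.
        measure M {\<omega>\<in>space M. P t \<omega> \<le> s * x \<and> history P af lf tf \<omega> (t - 1) = h}
        \<le> x * measure M {\<omega>\<in>space M. P t \<omega> \<le> s \<and> history P af lf tf \<omega> (t - 1) = h})"

text \<open>Independence: the null p-values P_j (j in H0) and the block of all non-null
  p-values (P_k)_{k \<ge> 1, k \<notin> H0} are mutually independent.\<close>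
definition nullblock :: "nat set \<Rightarrow> nat option \<Rightarrow> nat set" where
  "nullblock H0 i = (case i of Some j \<Rightarrow> {j} | None \<Rightarrow> {1..} - H0)"

definition nulls_indep :: "'a measure \<Rightarrow> (nat \<Rightarrow> 'a \<Rightarrow> real) \<Rightarrow> nat set \<Rightarrow> bool" where
  "nulls_indep M P H0 \<longleftrightarrow>
     prob_space.indep_vars M (\<lambda>i. PiM (nullblock H0 i) (\<lambda>_. (borel :: real measure)))
       (\<lambda>i \<omega>. restrict (\<lambda>k. P k \<omega>) (nullblock H0 i)) (Some ` H0 \<union> {None})"

definition hist_le :: "hist \<Rightarrow> hist \<Rightarrow> bool" where
  "hist_le h h' \<longleftrightarrow> length h = length h' \<and>
     (\<forall>i<length h. (fst (h!i) \<longrightarrow> fst (h'!i)) \<and>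
                   (fst (snd (h!i)) \<longrightarrow> fst (snd (h'!i))) \<and>
                   (snd (snd (h'!i)) \<longrightarrow> snd (snd (h!i))))"

definition monotone_past :: "(hist \<Rightarrow> real) \<Rightarrow> bool" where
  "monotone_past f \<longleftrightarrow> (\<forall>h h'. hist_le h h' \<longrightarrow> f h \<le> f h')"

end

theory Submission
  imports Defs
begin

lemma length_history[simp]: "length (history Q af lf tf \<omega> n) = n"
  by (induction n) (auto simp: Let_def)

lemma history_agree:
  "(\<And>k. k \<in> {1..n} \<Longrightarrow> Q k \<omega> = Q' k \<omega>) \<Longrightarrow> history Q af lf tf \<omega> n = history Q' af lf tf \<omega> n"
  by (induction n) (auto simp: Let_def)

lemma history_Suc_eq:
  "(history Q af lf tf \<omega> (Suc n) = h') \<longleftrightarrow>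
   (h' \<noteq> [] \<and> history Q af lf tf \<omega> n = butlast h' \<and>
    (Q (Suc n) \<omega> \<le> af (butlast h')) = fst (last h') \<and>
    (Q (Suc n) \<omega> \<le> lf (butlast h')) = fst (snd (last h')) \<and>
    (Q (Suc n) \<omega> \<le> tf (butlast h')) = snd (snd (last h')))"
  apply (simp add: Let_def)
  apply (cases h' rule: rev_cases)
   apply auto
  done

lemma history_sets:
  assumes "\<And>k. k \<in> {1..n} \<Longrightarrow> Q k \<in> borel_measurable N"
  shows "{\<omega>\<in>space N. history Q af lf tf \<omega> n = h} \<in> sets N"
  using assms
proof (induction n arbitrary: h)
  case 0
  then show ?case by (cases h) auto
next
  case (Suc n)
  have m: "Q (Suc n) \<in> borel_measurable N" using Suc.prems by auto
  have IH: "{\<omega>\<in>space N. history Q af lf tf \<omega> n = butlast h} \<in> sets N"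
    using Suc by auto
  have e: "{\<omega>\<in>space N. history Q af lf tf \<omega> (Suc n) = h} =
     {\<omega>\<in>space N. history Q af lf tf \<omega> n = butlast h} \<inter>
     {\<omega>\<in>space N. h \<noteq> [] \<and> (Q (Suc n) \<omega> \<le> af (butlast h)) = fst (last h) \<and>
    (Q (Suc n) \<omega> \<le> lf (butlast h)) = fst (snd (last h)) \<and>
    (Q (Suc n) \<omega> \<le> tf (butlast h)) = snd (snd (last h))}"
    unfolding history_Suc_eq by blast
  have p: "Measurable.pred N (\<lambda>x. (Q (Suc n) x \<le> c) = b)" for c b
  proof (cases b)
    case True
    then show ?thesis using m by simp
  next
    case False
    then show ?thesis using m by simp
  qed
  note [measurable] = p
  show ?case unfolding e
    by (intro sets.Int IH) measurable
qed

lemma history_meas: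
  assumes "\<And>k. k \<in> {1..n} \<Longrightarrow> Q k \<in> borel_measurable N"
  shows "(\<lambda>\<omega>. history Q af lf tf \<omega> n) \<in> measurable N (count_space UNIV)"
  unfolding measurable_count_space_eq2_countable
proof (intro conjI ballI)
  fix a :: hist
  have "(\<lambda>\<omega>. history Q af lf tf \<omega> n) -` {a} \<inter> space N = {\<omega>\<in>space N. history Q af lf tf \<omega> n = a}"
    by auto
  then show "(\<lambda>\<omega>. history Q af lf tf \<omega> n) -` {a} \<inter> space N \<in> sets N"
    using history_sets[OF assms] by simp
qed auto

lemma alphaj_meas:
  assumes "\<And>k. k \<in> {1..j-1} \<Longrightarrow> Q k \<in> borel_measurable N"
  shows "alphaj Q af lf tf j \<in> borel_measurable N"
    "lamj Q af lf tf j \<in> borel_measurable N"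
    "tauj Q af lf tf j \<in> borel_measurable N"
  unfolding alphaj_def[abs_def] lamj_def[abs_def] tauj_def[abs_def]
  by (rule measurable_compose[OF history_meas[OF assms] borel_measurable_count_space], simp)+

lemma card_Rset_eq:
  "real (card (Rset Q af lf tf T \<omega>)) = (\<Sum>j\<in>{1..T}. if Q j \<omega> \<le> alphaj Q af lf tf j \<omega> then 1 else 0)"
proof -
  have "{j \<in> {1..T}. Q j \<omega> \<le> alphaj Q af lf tf j \<omega>} = {1..T} \<inter> {j. Q j \<omega> \<le> alphaj Q af lf tf j \<omega>}" by auto
  then show ?thesis unfolding Rset_def by (simp add: sum.If_cases)
qed

lemma card_Rset_meas:
  assumes "\<And>k. k \<in> {1..T} \<Longrightarrow> Q k \<in> borel_measurable N"
  shows "(\<lambda>\<omega>. real (card (Rset Q af lf tf T \<omega>))) \<in> borel_measurable N"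
  unfolding card_Rset_eq
proof (intro borel_measurable_sum)
  fix j assume j: "j \<in> {1..T}"
  have a: "alphaj Q af lf tf j \<in> borel_measurable N"
    by (rule alphaj_meas) (use assms j in auto)
  have q: "Q j \<in> borel_measurable N" using assms j by auto
  show "(\<lambda>\<omega>. if Q j \<omega> \<le> alphaj Q af lf tf j \<omega> then 1 else 0::real) \<in> borel_measurable N"
    using a q by measurable
qed

lemma cons_ineq:
  fixes F :: "real \<Rightarrow> real"
  assumes c: "\<And>x s. x \<in> {0..1} \<Longrightarrow> s \<in> {0..1} \<Longrightarrow> F (s * x) \<le> x * F s"
    and a: "0 \<le> a" "a \<le> l" "l < \<tau>" "\<tau> \<le> 1"
  shows "F a \<le> a / (\<tau> - l) * (F \<tau> - F l)"
proof -
  have tp: "\<tau> > 0" using a by linarith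
  have 1: "F a \<le> a / \<tau> * F \<tau>"
    using c[of "a/\<tau>" \<tau>] a tp by (simp add: field_simps)
  have 2: "F l \<le> l / \<tau> * F \<tau>"
    using c[of "l/\<tau>" \<tau>] a tp by (simp add: field_simps)
  have 3: "F \<tau> - F l \<ge> (\<tau> - l) / \<tau> * F \<tau>"
    using 2 tp by (simp add: field_simps)
  have "a / (\<tau> - l) * ((\<tau> - l) / \<tau> * F \<tau>) \<le> a / (\<tau> - l) * (F \<tau> - F l)"
    using 3 a by (intro mult_left_mono) auto
  moreover have "a / (\<tau> - l) * ((\<tau> - l) / \<tau> * F \<tau>) = a / \<tau> * F \<tau>"
    using a by (simp add: field_simps)
  ultimately show ?thesis using 1 by linarith
qed

lemma (in finite_measure) integral_partition:
  fixes f :: "'a \<Rightarrow> real" and \<phi> :: "'a \<Rightarrow> 'b"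
  assumes "finite Ix" "\<And>\<omega>. \<omega> \<in> space M \<Longrightarrow> \<phi> \<omega> \<in> Ix"
    "\<And>i. i \<in> Ix \<Longrightarrow> {\<omega>\<in>space M. \<phi> \<omega> = i} \<in> sets M" "integrable M f"
  shows "integral\<^sup>L M f = (\<Sum>i\<in>Ix. \<integral>\<omega>. indicator {\<omega>\<in>space M. \<phi> \<omega> = i} \<omega> * f \<omega> \<partial>M)"
proof -
  have "integral\<^sup>L M f = (\<integral>\<omega>. (\<Sum>i\<in>Ix. indicator {\<omega>\<in>space M. \<phi> \<omega> = i} \<omega> * f \<omega>) \<partial>M)"
  proof (rule Bochner_Integration.integral_cong[OF refl])
    fix \<omega> assume w: "\<omega> \<in> space M"
    have "(\<Sum>i\<in>Ix. indicator {\<omega>\<in>space M. \<phi> \<omega> = i} \<omega> * f \<omega>) = (\<Sum>i\<in>Ix. if \<phi> \<omega> = i then f \<omega> else 0)"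
      using w by (intro sum.cong) (auto simp: indicator_def)
    also have "\<dots> = f \<omega>" using assms(1) assms(2)[OF w] by (simp add: sum.delta)
    finally show "f \<omega> = (\<Sum>i\<in>Ix. indicator {\<omega>\<in>space M. \<phi> \<omega> = i} \<omega> * f \<omega>)" by simp
  qed
  also have "\<dots> = (\<Sum>i\<in>Ix. \<integral>\<omega>. indicator {\<omega>\<in>space M. \<phi> \<omega> = i} \<omega> * f \<omega> \<partial>M)"
    by (rule Bochner_Integration.integral_sum) (use integrable_mult_indicator[OF assms(3) assms(4)] in auto)
  finally show ?thesis .
qed

lemma (in finite_measure) integral_block:
  fixes f :: "'a \<Rightarrow> real"
  assumes "A \<in> sets M" "B \<in> sets M" "\<And>\<omega>. \<omega> \<in> B \<Longrightarrow> f \<omega> = c * indicator A \<omega>"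
  shows "(\<integral>\<omega>. indicator B \<omega> * f \<omega> \<partial>M) = c * measure M (A \<inter> B)"
proof -
  have "(\<integral>\<omega>. indicator B \<omega> * f \<omega> \<partial>M) = (\<integral>\<omega>. c * indicator (A \<inter> B) \<omega> \<partial>M)"
    using assms by (intro Bochner_Integration.integral_cong[OF refl]) (auto simp: indicator_def)
  also have "\<dots> = c * measure M (A \<inter> B)"
    using assms sets.sets_into_space by (simp add: integral_mult_right_zero Int_absorb2)
  finally show ?thesis .
qed

lemma AE_pos_ex:
  assumes "AE \<omega> in M. Q \<omega>" "B \<in> sets M" "measure M B > 0"
  shows "\<exists>\<omega>\<in>B. Q \<omega>"
proof (rule ccontr)
  assume "\<not> ?thesis"
  then have "AE \<omega> in M. \<omega> \<notin> B" using assms(1) by (auto elim: AE_mp)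
  moreover have "{x \<in> space M. \<not> (x \<notin> B)} = B" using sets.sets_into_space[OF assms(2)] by auto
  ultimately have "emeasure M B = 0" using AE_iff_measurable[OF assms(2), of "\<lambda>x. x \<notin> B"] by simp
  then show False using assms(3) by (simp add: measure_def)
qed

lemma hist_replace_eq:
  assumes t: "t \<ge> 1" and p: "P t \<omega> \<le> af (history P af lf tf \<omega> (t-1))"
    "P t \<omega> \<le> lf (history P af lf tf \<omega> (t-1))" "P t \<omega> \<le> tf (history P af lf tf \<omega> (t-1))"
    and nn: "\<And>h. af h \<ge> 0" "\<And>h. lf h \<ge> 0" "\<And>h. tf h \<ge> 0"
  shows "history P af lf tf \<omega> n = history (P(t := (\<lambda>_. 0))) af lf tf \<omega> n"
proof (induction n)
  case 0
  then show ?case by simp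
next
  case (Suc n)
  show ?case
  proof (cases "Suc n = t")
    case True
    then have nt: "t - 1 = n" by simp
    have e2: "(P(t := (\<lambda>_. 0))) (Suc n) = (\<lambda>_. 0)" using True by simp
    have e1: "P (Suc n) \<omega> \<le> af (history P af lf tf \<omega> n)" "P (Suc n) \<omega> \<le> lf (history P af lf tf \<omega> n)"
      "P (Suc n) \<omega> \<le> tf (history P af lf tf \<omega> n)" using p True nt by auto
    show ?thesis
      by (simp only: history.simps Let_def) (simp add: Suc.IH[symmetric] e1 e2 nn del: fun_upd_apply)
  next
    case False
    then show ?thesis using Suc by (simp add: Let_def)
  qed
qed

lemma Rset_replace_eq:
  assumes t: "t \<ge> 1" and p: "P t \<omega> \<le> af (history P af lf tf \<omega> (t-1))"
    "P t \<omega> \<le> lf (history P af lf tf \<omega> (t-1))" "P t \<omega> \<le> tf (history P af lf tf \<omega> (t-1))"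
    and nn: "\<And>h. af h \<ge> 0" "\<And>h. lf h \<ge> 0" "\<And>h. tf h \<ge> 0"
  shows "Rset P af lf tf T \<omega> = Rset (P(t := (\<lambda>_. 0))) af lf tf T \<omega>"
proof -
  note e = hist_replace_eq[where P=P and t=t and \<omega>=\<omega> and af=af and lf=lf and tf=tf, OF t p nn]
  show ?thesis unfolding Rset_def alphaj_def
    using p(1) nn(1) by (auto simp: e[symmetric] split: if_splits)
qed

lemma hist_le_snoc:
  assumes "hist_le h h'" "fst x \<longrightarrow> fst y" "fst (snd x) \<longrightarrow> fst (snd y)" "snd (snd y) \<longrightarrow> snd (snd x)"
  shows "hist_le (h @ [x]) (h' @ [y])"
  using assms unfolding hist_le_def by (auto simp: nth_append less_Suc_eq)

lemma hist_replace_le: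
  assumes t: "t \<ge> 1" and p: "lf (history P af lf tf \<omega> (t-1)) < P t \<omega>" "P t \<omega> \<le> tf (history P af lf tf \<omega> (t-1))"
    and nn: "\<And>h. af h \<ge> 0" "\<And>h. lf h \<ge> 0" "\<And>h. tf h \<ge> 0"
    and ma: "monotone_past af" and ml: "monotone_past lf" and mt: "monotone_past (\<lambda>h. 1 - tf h)"
  shows "hist_le (history P af lf tf \<omega> n) (history (P(t := (\<lambda>_. 0))) af lf tf \<omega> n)"
proof (induction n)
  case 0
  then show ?case by (simp add: hist_le_def)
next
  case (Suc n)
  let ?h = "history P af lf tf \<omega> n" and ?h' = "history (P(t := (\<lambda>_. 0))) af lf tf \<omega> n"
  show ?case
  proof (cases "Suc n = t")
    case True
    then have nt: "t - 1 = n" by simp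
    have eq: "?h = ?h'" by (rule history_agree) (use True in auto)
    have hl: "hist_le ?h ?h'" unfolding hist_le_def eq by auto
    have e2: "(P(t := (\<lambda>_. 0))) (Suc n) = (\<lambda>_. 0)" using True by simp
    have e1: "lf ?h < P (Suc n) \<omega>" "P (Suc n) \<omega> \<le> tf ?h" using p True nt by auto
    show ?thesis
      by (simp only: history.simps Let_def, rule hist_le_snoc[OF hl])
         (use e1 e2 nn eq in \<open>auto simp del: fun_upd_apply\<close>)
  next
    case False
    have hl: "hist_le ?h ?h'" by (rule Suc.IH)
    have a: "af ?h \<le> af ?h'" "lf ?h \<le> lf ?h'" "1 - tf ?h \<le> 1 - tf ?h'"
      using hl ma ml mt unfolding monotone_past_def by blast+
    have e3: "(P(t := (\<lambda>_. 0))) (Suc n) = P (Suc n)" using False by simp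
    show ?thesis
      by (simp only: history.simps Let_def e3, rule hist_le_snoc[OF hl]) (use a in auto)
  qed
qed

lemma Rset_replace_le:
  assumes t: "t \<ge> 1" and p: "lf (history P af lf tf \<omega> (t-1)) < P t \<omega>" "P t \<omega> \<le> tf (history P af lf tf \<omega> (t-1))"
    and nn: "\<And>h. af h \<ge> 0" "\<And>h. lf h \<ge> 0" "\<And>h. tf h \<ge> 0"
    and ma: "monotone_past af" and ml: "monotone_past lf" and mt: "monotone_past (\<lambda>h. 1 - tf h)"
  shows "Rset P af lf tf T \<omega> \<subseteq> Rset (P(t := (\<lambda>_. 0))) af lf tf T \<omega>"
proof
  fix j assume "j \<in> Rset P af lf tf T \<omega>"
  then have j: "j \<in> {1..T}" "P j \<omega> \<le> af (history P af lf tf \<omega> (j - 1))"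
    unfolding Rset_def alphaj_def by auto
  have "af (history P af lf tf \<omega> (j - 1)) \<le> af (history (P(t := (\<lambda>_. 0))) af lf tf \<omega> (j - 1))"
    using hist_replace_le[OF assms, of "j-1"] ma unfolding monotone_past_def by auto
  then show "j \<in> Rset (P(t := (\<lambda>_. 0))) af lf tf T \<omega>"
    using j nn(1) unfolding Rset_def alphaj_def by auto
qed

lemma card_Rset_le: "card (Rset Q af lf tf T \<omega>) \<le> T"
proof -
  have "Rset Q af lf tf T \<omega> \<subseteq> {1..T}" unfolding Rset_def by auto
  from card_mono[OF _ this] show ?thesis by simp
qed

lemma abs_div_ge1: fixes x y :: real assumes "y \<ge> 1" shows "\<bar>x / y\<bar> \<le> \<bar>x\<bar>"
proof -
  have "\<bar>x / y\<bar> = \<bar>x\<bar> / y" using assms by (simp add: abs_divide)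
  also have "\<dots> \<le> \<bar>x\<bar> / 1" using assms by (intro divide_left_mono) auto
  finally show ?thesis by simp
qed

definition Dj where
  "Dj P af lf tf j \<omega> = alphaj P af lf tf j \<omega> *
         (if lamj P af lf tf j \<omega> < P j \<omega> \<and> P j \<omega> \<le> tauj P af lf tf j \<omega> then 1 else 0)
         / (tauj P af lf tf j \<omega> - lamj P af lf tf j \<omega>)"

locale addis = prob_space M for M :: "'a measure" +
  fixes P :: "nat \<Rightarrow> 'a \<Rightarrow> real" and H0 :: "nat set" and af lf tf :: "hist \<Rightarrow> real"
  assumes Pm: "\<And>j. P j \<in> borel_measurable M"
    and H0: "H0 \<subseteq> {1..}"
    and af: "\<And>h. af h \<in> {0..1}" and lf: "\<And>h. lf h \<in> {0..1}" and tf: "\<And>h. tf h \<in> {0..1}"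
    and ord: "AE \<omega> in M. \<forall>j\<ge>1. tauj P af lf tf j \<omega> > lamj P af lf tf j \<omega>
                          \<and> lamj P af lf tf j \<omega> \<ge> alphaj P af lf tf j \<omega>"
    and cuc: "cond_unif_conservative M P H0 af lf tf"
begin

abbreviation "hi \<equiv> history P af lf tf"
abbreviation "L n \<equiv> {h :: hist. length h = n}"

lemma finL: "finite (L n)"
  using finite_lists_length_eq[of "UNIV::(bool\<times>bool\<times>bool) set" n] by simp

lemma hist_sets: "{\<omega>\<in>space M. hi \<omega> n = h} \<in> sets M"
  by (rule history_sets) (rule Pm)

lemma ameas: "alphaj P af lf tf j \<in> borel_measurable M" "lamj P af lf tf j \<in> borel_measurable M"
   "tauj P af lf tf j \<in> borel_measurable M"
  by (rule alphaj_meas; rule Pm)+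

lemma Dj_meas: "Dj P af lf tf j \<in> borel_measurable M"
  using ameas[of j] Pm[of j] unfolding Dj_def[abs_def] by measurable

lemma Dj_bound: "\<bar>Dj P af lf tf j \<omega>\<bar> \<le> (\<Sum>h\<in>L (j-1). \<bar>af h / (tf h - lf h)\<bar>)"
proof -
  let ?h = "hi \<omega> (j-1)"
  have "\<bar>Dj P af lf tf j \<omega>\<bar> \<le> \<bar>af ?h / (tf ?h - lf ?h)\<bar>"
    unfolding Dj_def alphaj_def lamj_def tauj_def by (auto simp: abs_mult)
  also have "\<dots> \<le> (\<Sum>h\<in>L (j-1). \<bar>af h / (tf h - lf h)\<bar>)"
    by (rule member_le_sum[where f="\<lambda>h. \<bar>af h / (tf h - lf h)\<bar>"]) (auto simp: finL)
  finally show ?thesis .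
qed

lemma Dj_int: "integrable M (Dj P af lf tf j)"
  by (rule integrable_const_bound[where B="\<Sum>h\<in>L (j-1). \<bar>af h / (tf h - lf h)\<bar>"])
     (rule AE_I2, simp only: real_norm_def, rule Dj_bound, rule Dj_meas)

lemma ord_at:
  assumes "B \<subseteq> {\<omega>\<in>space M. hi \<omega> (j-1) = h}" "B \<in> sets M" "prob B > 0" "j \<ge> 1"
  shows "tf h > lf h \<and> lf h \<ge> af h"
proof -
  obtain \<omega> where "\<omega> \<in> B" "\<forall>j\<ge>1. tauj P af lf tf j \<omega> > lamj P af lf tf j \<omega>
                          \<and> lamj P af lf tf j \<omega> \<ge> alphaj P af lf tf j \<omega>"
    using AE_pos_ex[OF ord assms(2,3)] by blast
  with assms show ?thesis unfolding tauj_def lamj_def alphaj_def by force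
qed

lemma cuc_at:
  assumes "t \<in> H0" "x \<in> {0..1}" "s \<in> {0..1}"
  shows "prob ({\<omega>\<in>space M. P t \<omega> \<le> s * x} \<inter> {\<omega>\<in>space M. hi \<omega> (t-1) = h})
     \<le> x * prob ({\<omega>\<in>space M. P t \<omega> \<le> s} \<inter> {\<omega>\<in>space M. hi \<omega> (t-1) = h})"
proof -
  have "\<And>v. {\<omega>\<in>space M. P t \<omega> \<le> v} \<inter> {\<omega>\<in>space M. hi \<omega> (t-1) = h} = {\<omega>\<in>space M. P t \<omega> \<le> v \<and> hi \<omega> (t-1) = h}"
    by auto
  then show ?thesis using cuc assms unfolding cond_unif_conservative_def by auto
qed

lemma Ple_sets: "{\<omega>\<in>space M. P t \<omega> \<le> v} \<in> sets M"
  using Pm[of t] by measurable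

lemma Pint_sets: "{\<omega>\<in>space M. l < P t \<omega> \<and> P t \<omega> \<le> v} \<in> sets M"
  using Pm[of t] by measurable

lemma rej_le_D:
  assumes j: "j \<in> H0"
  shows "prob {\<omega>\<in>space M. P j \<omega> \<le> alphaj P af lf tf j \<omega>} \<le> integral\<^sup>L M (Dj P af lf tf j)"
proof -
  have j1: "j \<ge> 1" using j H0 by auto
  let ?phi = "\<lambda>\<omega>. hi \<omega> (j-1)"
  let ?B = "\<lambda>h. {\<omega>\<in>space M. ?phi \<omega> = h}"
  let ?R = "{\<omega>\<in>space M. P j \<omega> \<le> alphaj P af lf tf j \<omega>}"
  have Rs: "?R \<in> sets M" using ameas[of j] Pm[of j] by measurable
  have "prob ?R = integral\<^sup>L M (indicator ?R)" by (simp add: Int_absorb2)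
  also have "\<dots> = (\<Sum>h\<in>L (j-1). \<integral>\<omega>. indicator (?B h) \<omega> * indicator ?R \<omega> \<partial>M)"
    by (rule integral_partition) (auto simp: finL hist_sets Rs integrable_indicator_iff less_top[symmetric])
  also have "\<dots> = (\<Sum>h\<in>L (j-1). 1 * prob ({\<omega>\<in>space M. P j \<omega> \<le> af h} \<inter> ?B h))"
    by (intro sum.cong refl integral_block Ple_sets hist_sets) (auto simp: alphaj_def indicator_def)
  also have "\<dots> \<le> (\<Sum>h\<in>L (j-1). af h / (tf h - lf h) * prob ({\<omega>\<in>space M. lf h < P j \<omega> \<and> P j \<omega> \<le> tf h} \<inter> ?B h))"
  proof (intro sum_mono)
    fix h assume "h \<in> L (j-1)"
    show "1 * prob ({\<omega>\<in>space M. P j \<omega> \<le> af h} \<inter> ?B h)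
        \<le> af h / (tf h - lf h) * prob ({\<omega>\<in>space M. lf h < P j \<omega> \<and> P j \<omega> \<le> tf h} \<inter> ?B h)"
    proof (cases "prob (?B h) = 0")
      case True
      have "prob ({\<omega>\<in>space M. P j \<omega> \<le> af h} \<inter> ?B h) \<le> prob (?B h)"
        by (intro finite_measure_mono hist_sets) auto
      moreover have "prob ({\<omega>\<in>space M. lf h < P j \<omega> \<and> P j \<omega> \<le> tf h} \<inter> ?B h) \<le> prob (?B h)"
        by (intro finite_measure_mono hist_sets) auto
      ultimately show ?thesis using True by (simp add: measure_le_0_iff)
    next
      case False
      then have "prob (?B h) > 0" using measure_nonneg[of M "?B h"] by linarith
      from ord_at[OF _ hist_sets this j1] have o: "tf h > lf h" "lf h \<ge> af h" by auto
      define F where "F v = prob ({\<omega>\<in>space M. P j \<omega> \<le> v} \<inter> ?B h)" for v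
      have cF: "F (s * x) \<le> x * F s" if "x \<in> {0..1}" "s \<in> {0..1}" for x s
        unfolding F_def using cuc_at[OF j that] .
      have "F (af h) \<le> af h / (tf h - lf h) * (F (tf h) - F (lf h))"
        by (rule cons_ineq[OF cF]) (use o af[of h] tf[of h] in auto)
      moreover have "F (tf h) - F (lf h) = prob ({\<omega>\<in>space M. lf h < P j \<omega> \<and> P j \<omega> \<le> tf h} \<inter> ?B h)"
      proof -
        have "{\<omega>\<in>space M. lf h < P j \<omega> \<and> P j \<omega> \<le> tf h} \<inter> ?B h =
            ({\<omega>\<in>space M. P j \<omega> \<le> tf h} \<inter> ?B h) - ({\<omega>\<in>space M. P j \<omega> \<le> lf h} \<inter> ?B h)"
          using o by auto
        moreover have "prob (({\<omega>\<in>space M. P j \<omega> \<le> tf h} \<inter> ?B h) - ({\<omega>\<in>space M. P j \<omega> \<le> lf h} \<inter> ?B h))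
           = prob ({\<omega>\<in>space M. P j \<omega> \<le> tf h} \<inter> ?B h) - prob ({\<omega>\<in>space M. P j \<omega> \<le> lf h} \<inter> ?B h)"
          by (rule finite_measure_Diff) (use o in \<open>auto intro!: sets.Int Ple_sets hist_sets\<close>)
        ultimately show ?thesis unfolding F_def by simp
      qed
      ultimately show ?thesis unfolding F_def by simp
    qed
  qed
  also have "\<dots> = (\<Sum>h\<in>L (j-1). \<integral>\<omega>. indicator (?B h) \<omega> * Dj P af lf tf j \<omega> \<partial>M)"
    by (intro sum.cong refl integral_block[symmetric] Pint_sets hist_sets)
       (auto simp: Dj_def alphaj_def lamj_def tauj_def indicator_def)
  also have "\<dots> = integral\<^sup>L M (Dj P af lf tf j)"
    by (rule integral_partition[symmetric]) (auto simp: finL hist_sets Dj_int)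
  finally show ?thesis .
qed

lemma Rset_sub: "Rset P af lf tf T \<omega> \<subseteq> {1..T}"
  unfolding Rset_def by auto

lemma card_H0R:
  "real (card (H0 \<inter> Rset P af lf tf T \<omega>)) =
   (\<Sum>j\<in>H0 \<inter> {1..T}. indicator {\<omega>\<in>space M. P j \<omega> \<le> alphaj P af lf tf j \<omega>} \<omega>)" if "\<omega> \<in> space M"
proof -
  have "H0 \<inter> Rset P af lf tf T \<omega> = (H0 \<inter> {1..T}) \<inter> {j. P j \<omega> \<le> alphaj P af lf tf j \<omega>}"
    unfolding Rset_def by auto
  then show ?thesis using that by (simp add: indicator_def sum.If_cases)
qed

lemma m_meas: "(\<lambda>\<omega>. max (real (card (Rset P af lf tf T \<omega>))) 1) \<in> borel_measurable M"
  using card_Rset_meas[of T P M] Pm by measurable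

lemma card_le: "real (card (Rset P af lf tf T \<omega>)) \<le> real T"
  using card_mono[OF _ Rset_sub, of T] by auto

lemma m_int: "integrable M (\<lambda>\<omega>. max (real (card (Rset P af lf tf T \<omega>))) 1)"
proof (rule integrable_const_bound[where B="real T + 1"])
  show "AE x in M. norm (max (real (card (Rset P af lf tf T x))) 1) \<le> real T + 1"
  proof (intro AE_I2)
    fix x
    have "real (card (Rset P af lf tf T x)) \<le> real T" by (rule card_le)
    then show "norm (max (real (card (Rset P af lf tf T x))) 1) \<le> real T + 1" by simp
  qed
qed (rule m_meas)

lemma Dj_nonneg: "AE \<omega> in M. \<forall>j\<ge>1. Dj P af lf tf j \<omega> \<ge> 0"
  using ord
proof (rule AE_mp, intro AE_I2 impI allI)
  fix \<omega> and j :: nat assume o: "\<forall>j\<ge>1. tauj P af lf tf j \<omega> > lamj P af lf tf j \<omega>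
                          \<and> lamj P af lf tf j \<omega> \<ge> alphaj P af lf tf j \<omega>" and "1 \<le> j"
  show "0 \<le> Dj P af lf tf j \<omega>"
  proof -
    from o \<open>1 \<le> j\<close> have "tauj P af lf tf j \<omega> - lamj P af lf tf j \<omega> > 0" by auto
    moreover have "alphaj P af lf tf j \<omega> \<ge> 0" using af unfolding alphaj_def by auto
    ultimately show "0 \<le> Dj P af lf tf j \<omega>" unfolding Dj_def by auto
  qed
qed

lemma Dj_int_nonneg: "j \<ge> 1 \<Longrightarrow> integral\<^sup>L M (Dj P af lf tf j) \<ge> 0"
  by (rule integral_nonneg_AE) (use Dj_nonneg in \<open>auto elim: AE_mp\<close>)

lemma sumD_le:
  assumes "AE \<omega> in M. \<forall>t. FDPhat_ADDIS P af lf tf t \<omega> \<le> \<alpha>"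
  shows "AE \<omega> in M. (\<Sum>j\<in>{1..T}. Dj P af lf tf j \<omega>) \<le> \<alpha> * max (real (card (Rset P af lf tf T \<omega>))) 1"
  using assms
proof (rule AE_mp, intro AE_I2 impI)
  fix \<omega> assume "\<forall>t. FDPhat_ADDIS P af lf tf t \<omega> \<le> \<alpha>"
  then have "(\<Sum>j\<in>{1..T}. Dj P af lf tf j \<omega>) / max (real (card (Rset P af lf tf T \<omega>))) 1 \<le> \<alpha>"
    unfolding FDPhat_ADDIS_def Dj_def by auto
  then show "(\<Sum>j\<in>{1..T}. Dj P af lf tf j \<omega>) \<le> \<alpha> * max (real (card (Rset P af lf tf T \<omega>))) 1"
    by (simp add: divide_le_eq)
qed

lemma part_a:
  assumes "AE \<omega> in M. \<forall>t. FDPhat_ADDIS P af lf tf t \<omega> \<le> \<alpha>"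
  shows "mFDR M P H0 af lf tf T \<le> \<alpha>"
proof -
  let ?m = "\<lambda>\<omega>. max (real (card (Rset P af lf tf T \<omega>))) 1"
  let ?R = "\<lambda>j. {\<omega>\<in>space M. P j \<omega> \<le> alphaj P af lf tf j \<omega>}"
  have Rs: "?R j \<in> sets M" for j using ameas[of j] Pm[of j] by measurable
  have fin: "finite (H0 \<inter> {1..T})" by auto
  have "(\<integral>\<omega>. real (card (H0 \<inter> Rset P af lf tf T \<omega>)) \<partial>M) =
        (\<integral>\<omega>. (\<Sum>j\<in>H0 \<inter> {1..T}. indicator (?R j) \<omega>) \<partial>M)"
    by (rule Bochner_Integration.integral_cong[OF refl]) (rule card_H0R)
  also have "\<dots> = (\<Sum>j\<in>H0 \<inter> {1..T}. prob (?R j))"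
    by (subst Bochner_Integration.integral_sum)
       (auto simp: Rs integrable_indicator_iff less_top[symmetric] Int_absorb2)
  also have "\<dots> \<le> (\<Sum>j\<in>H0 \<inter> {1..T}. integral\<^sup>L M (Dj P af lf tf j))"
    by (intro sum_mono rej_le_D) auto
  also have "\<dots> \<le> (\<Sum>j\<in>{1..T}. integral\<^sup>L M (Dj P af lf tf j))"
    by (rule sum_mono2) (auto intro: Dj_int_nonneg)
  also have "\<dots> = (\<integral>\<omega>. (\<Sum>j\<in>{1..T}. Dj P af lf tf j \<omega>) \<partial>M)"
    by (rule Bochner_Integration.integral_sum[symmetric]) (rule Dj_int)
  also have "\<dots> \<le> (\<integral>\<omega>. \<alpha> * ?m \<omega> \<partial>M)"
    by (rule integral_mono_AE[OF _ _ sumD_le[OF assms]]) (auto intro!: m_int Dj_int)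
  also have "\<dots> = \<alpha> * (\<integral>\<omega>. ?m \<omega> \<partial>M)" by simp
  finally have num: "(\<integral>\<omega>. real (card (H0 \<inter> Rset P af lf tf T \<omega>)) \<partial>M) \<le> \<alpha> * (\<integral>\<omega>. ?m \<omega> \<partial>M)" .
  have "(\<integral>\<omega>. ?m \<omega> \<partial>M) \<ge> (\<integral>\<omega>. 1 \<partial>M)"
    by (rule integral_mono) (auto intro!: m_int)
  then have pos: "(\<integral>\<omega>. ?m \<omega> \<partial>M) > 0" by (simp add: prob_space)
  show ?thesis unfolding mFDR_def using num pos by (simp add: divide_le_eq)
qed

definition "Xb i \<omega> = restrict (\<lambda>k. P k \<omega>) (nullblock H0 i)"
definition "Eb i = {Xb i -` A \<inter> space M | A. A \<in> sets (PiM (nullblock H0 i) (\<lambda>_. (borel :: real measure)))}"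
abbreviation "Ix \<equiv> Some ` H0 \<union> {None}"

lemma Eb_mem:
  assumes "k \<in> nullblock H0 i"
  shows "{\<omega>\<in>space M. P k \<omega> \<le> v} \<in> Eb i"
proof -
  let ?A = "(\<lambda>f. f k) -` {..v} \<inter> space (PiM (nullblock H0 i) (\<lambda>_. (borel :: real measure)))"
  have "?A \<in> sets (PiM (nullblock H0 i) (\<lambda>_. (borel :: real measure)))"
    by (rule measurable_sets[OF measurable_component_singleton[OF assms]]) simp
  moreover have "Xb i -` ?A \<inter> space M = {\<omega>\<in>space M. P k \<omega> \<le> v}"
    using assms by (auto simp: Xb_def space_PiM)
  ultimately show ?thesis unfolding Eb_def by blast
qed

lemma Eb_pow: "Eb i \<subseteq> Pow (space M)"
  unfolding Eb_def by auto

lemma indep2: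
  assumes ni: "nulls_indep M P H0" and t: "t \<in> H0"
  shows "indep_set (sigma_sets (space M) (Eb (Some t))) (sigma_sets (space M) (\<Union>i\<in>Ix - {Some t}. Eb i))"
proof -
  have is1: "indep_sets Eb Ix"
    using ni unfolding nulls_indep_def indep_vars_def2 Eb_def Xb_def by auto
  let ?I = "\<lambda>b. if b then {Some t} else Ix - {Some t}"
  have "(\<Union>b. ?I b) = Ix" using t by auto
  then have is2: "indep_sets Eb (\<Union>b. ?I b)" using is1 by simp
  have st: "Int_stable (Eb i)" for i
    unfolding Eb_def Int_stable_def
    apply auto
    apply (rule_tac x="A \<inter> Aa" in exI)
    apply auto
    done
  have dj: "disjoint_family_on ?I UNIV" unfolding disjoint_family_on_def by auto
  have r: "indep_sets (\<lambda>b. sigma_sets (space M) (\<Union>i\<in>?I b. Eb i)) UNIV"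
    by (rule indep_sets_collect_sigma[OF is2 st dj])
  have "(\<lambda>b. sigma_sets (space M) (\<Union>i\<in>?I b. Eb i)) =
     case_bool (sigma_sets (space M) (Eb (Some t))) (sigma_sets (space M) (\<Union>i\<in>Ix - {Some t}. Eb i))"
    by (rule ext) (auto split: bool.split)
  then show ?thesis using r unfolding indep_set_def by simp
qed

lemma core_b:
  assumes ni: "nulls_indep M P H0" and t: "t \<in> H0" and tT: "t \<le> T"
    and ma: "monotone_past af" and ml: "monotone_past lf" and mt: "monotone_past (\<lambda>h. 1 - tf h)"
  shows "(\<integral>\<omega>. indicator {\<omega>\<in>space M. P t \<omega> \<le> alphaj P af lf tf t \<omega>} \<omega> / max (real (card (Rset P af lf tf T \<omega>))) 1 \<partial>M)
    \<le> (\<integral>\<omega>. Dj P af lf tf t \<omega> / max (real (card (Rset P af lf tf T \<omega>))) 1 \<partial>M)"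
proof -
  have t1: "t \<ge> 1" using t H0 by auto
  have nn: "\<And>h. af h \<ge> 0" "\<And>h. lf h \<ge> 0" "\<And>h. tf h \<ge> 0" using af lf tf by auto
  define Q where "Q = P(t := (\<lambda>_. 0))"
  define S1 where "S1 = sigma_sets (space M) (Eb (Some t))"
  define G where "G = sigma_sets (space M) (\<Union>i\<in>Ix - {Some t}. Eb i)"
  have ind: "indep_set S1 G" unfolding S1_def G_def by (rule indep2[OF ni t])
  have S1ev: "S1 \<subseteq> events" using indep_setD_ev1[OF ind] .
  have Gev: "G \<subseteq> events" using indep_setD_ev2[OF ind] .
  have pr: "prob (a \<inter> b) = prob a * prob b" if "a \<in> S1" "b \<in> G" for a b
    by (rule indep_setD[OF ind that])
  define N where "N = measure_of (space M) (\<Union>i\<in>Ix - {Some t}. Eb i) (\<lambda>_. 0)"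
  have sN: "sets N = G" unfolding N_def G_def by (rule sets_measure_of) (use Eb_pow in blast)
  have spN: "space N = space M" unfolding N_def by (simp add: space_measure_of_conv)
  have QN: "Q k \<in> borel_measurable N" if "k \<in> {1..T}" for k
  proof (cases "k = t")
    case True
    then show ?thesis unfolding Q_def by simp
  next
    case False
    show ?thesis
    proof (rule borel_measurableI_le)
      fix y
      define i where "i = (if k \<in> H0 then Some k else None)"
      have "k \<in> nullblock H0 i" "i \<in> Ix - {Some t}"
        using that False unfolding i_def nullblock_def by auto
      then have "{\<omega>\<in>space M. P k \<omega> \<le> y} \<in> G"
        unfolding G_def using Eb_mem by (intro sigma_sets.Basic) blast
      then show "{w \<in> space N. Q k w \<le> y} \<in> sets N"
        using False by (simp add: sN spN Q_def)
    qed
  qed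
  have QM: "Q k \<in> borel_measurable M" for k
    unfolding Q_def using Pm by (cases "k = t") auto
  interpret S: sigma_algebra "space M" S1 unfolding S1_def by (rule sigma_algebra_sigma_sets[OF Eb_pow])
  have A_S1: "{\<omega>\<in>space M. P t \<omega> \<le> v} \<in> S1" for v
    unfolding S1_def by (rule sigma_sets.Basic, rule Eb_mem) (simp add: nullblock_def)
  have C_eq: "{\<omega>\<in>space M. l < P t \<omega> \<and> P t \<omega> \<le> v} = {\<omega>\<in>space M. P t \<omega> \<le> v} - {\<omega>\<in>space M. P t \<omega> \<le> l}" for l v
    by auto
  have C_S1: "{\<omega>\<in>space M. l < P t \<omega> \<and> P t \<omega> \<le> v} \<in> S1" for l v
    unfolding C_eq by (intro S.Diff A_S1)
  have hQ: "history Q af lf tf \<omega> (t-1) = hi \<omega> (t-1)" for \<omega>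
    by (rule history_agree) (auto simp: Q_def)
  have H_G: "{\<omega>\<in>space M. hi \<omega> (t-1) = h} \<in> G" for h
  proof -
    have "{\<omega>\<in>space N. history Q af lf tf \<omega> (t-1) = h} \<in> sets N"
      by (rule history_sets) (use QN tT in auto)
    then show ?thesis unfolding sN spN hQ .
  qed
  define \<phi> where "\<phi> \<omega> = (hi \<omega> (t-1), card (Rset Q af lf tf T \<omega>))" for \<omega>
  let ?I2 = "L (t-1) \<times> {0..T}"
  have fin2: "finite ?I2" using finL by auto
  have phiI: "\<phi> \<omega> \<in> ?I2" for \<omega> unfolding \<phi>_def using card_Rset_le[of Q af lf tf T \<omega>] by auto
  have cardN: "(\<lambda>\<omega>. real (card (Rset Q af lf tf T \<omega>))) \<in> borel_measurable N"
    by (rule card_Rset_meas) (rule QN)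
  have B_G: "{\<omega>\<in>space M. \<phi> \<omega> = i} \<in> G" for i
  proof -
    have 1: "{\<omega>\<in>space N. history Q af lf tf \<omega> (t-1) = fst i} \<in> sets N"
      by (rule history_sets) (use QN tT in auto)
    have 2: "{\<omega>\<in>space N. real (card (Rset Q af lf tf T \<omega>)) = real (snd i)} \<in> sets N"
      using cardN by measurable
    have "{\<omega>\<in>space M. \<phi> \<omega> = i} = {\<omega>\<in>space N. history Q af lf tf \<omega> (t-1) = fst i} \<inter>
        {\<omega>\<in>space N. real (card (Rset Q af lf tf T \<omega>)) = real (snd i)}"
      unfolding \<phi>_def spN hQ by (cases i) auto
    with sets.Int[OF 1 2] show ?thesis by (simp add: sN)
  qed
  have B_M: "{\<omega>\<in>space M. \<phi> \<omega> = i} \<in> sets M" for i using B_G[of i] Gev by blast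
  define m where "m \<omega> = max (real (card (Rset P af lf tf T \<omega>))) 1" for \<omega>
  define mq where "mq \<omega> = max (real (card (Rset Q af lf tf T \<omega>))) 1" for \<omega>
  let ?R = "{\<omega>\<in>space M. P t \<omega> \<le> alphaj P af lf tf t \<omega>}"
  have Rs: "?R \<in> sets M" using ameas[of t] Pm[of t] by measurable
  have m_meas': "m \<in> borel_measurable M" unfolding m_def using m_meas .
  have mq_meas: "mq \<in> borel_measurable M" unfolding mq_def[abs_def]
    using card_Rset_meas[of T Q M af lf tf] QM by measurable
  have mq1: "mq \<omega> \<ge> 1" for \<omega> unfolding mq_def by simp
  have m1: "m \<omega> \<ge> 1" for \<omega> unfolding m_def by simp
  have int1: "integrable M (\<lambda>\<omega>. indicator ?R \<omega> / mq \<omega>)"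
  proof (rule integrable_const_bound[where B=1])
    show "AE x in M. norm (indicator ?R x / mq x) \<le> (1::real)"
    proof (intro AE_I2)
      fix x
      have "\<bar>indicator ?R x / mq x\<bar> \<le> \<bar>indicator ?R x\<bar>" by (rule abs_div_ge1[OF mq1])
      moreover have "\<bar>indicator ?R x\<bar> \<le> (1::real)" by (simp add: indicator_def)
      ultimately show "norm (indicator ?R x / mq x) \<le> (1::real)" unfolding real_norm_def by linarith
    qed
  qed (use Rs mq_meas in measurable)
  have DB: "\<bar>Dj P af lf tf t \<omega> / mq \<omega>\<bar> \<le> (\<Sum>h\<in>L (t-1). \<bar>af h / (tf h - lf h)\<bar>)" for \<omega>
  proof -
    have "\<bar>Dj P af lf tf t \<omega> / mq \<omega>\<bar> \<le> \<bar>Dj P af lf tf t \<omega>\<bar>"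
      by (rule abs_div_ge1[OF mq1])
    then show ?thesis using Dj_bound[of t \<omega>] by linarith
  qed
  have int2: "integrable M (\<lambda>\<omega>. Dj P af lf tf t \<omega> / mq \<omega>)"
  proof (rule integrable_const_bound[where B="\<Sum>h\<in>L (t-1). \<bar>af h / (tf h - lf h)\<bar>"])
    show "AE x in M. norm (Dj P af lf tf t x / mq x) \<le> (\<Sum>h\<in>L (t-1). \<bar>af h / (tf h - lf h)\<bar>)"
      using DB by (intro AE_I2) simp
  qed (use Dj_meas[of t] mq_meas in measurable)
  have int3: "integrable M (\<lambda>\<omega>. Dj P af lf tf t \<omega> / m \<omega>)"
  proof (rule integrable_const_bound[where B="\<Sum>h\<in>L (t-1). \<bar>af h / (tf h - lf h)\<bar>"])
    have "\<bar>Dj P af lf tf t \<omega> / m \<omega>\<bar> \<le> (\<Sum>h\<in>L (t-1). \<bar>af h / (tf h - lf h)\<bar>)" for \<omega>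
      using abs_div_ge1[OF m1, of "Dj P af lf tf t \<omega>" \<omega>] Dj_bound[of t \<omega>] by linarith
    then show "AE x in M. norm (Dj P af lf tf t x / m x) \<le> (\<Sum>h\<in>L (t-1). \<bar>af h / (tf h - lf h)\<bar>)"
      by (intro AE_I2) simp
  qed (use Dj_meas[of t] m_meas' in measurable)

  have "(\<integral>\<omega>. indicator ?R \<omega> / m \<omega> \<partial>M) = (\<integral>\<omega>. indicator ?R \<omega> / mq \<omega> \<partial>M)"
  proof (rule integral_cong_AE)
    show "(\<lambda>\<omega>. indicator ?R \<omega> / m \<omega>) \<in> borel_measurable M" using Rs m_meas' by measurable
    show "(\<lambda>\<omega>. indicator ?R \<omega> / mq \<omega>) \<in> borel_measurable M" using Rs mq_meas by measurable
    show "AE \<omega> in M. indicator ?R \<omega> / m \<omega> = indicator ?R \<omega> / mq \<omega>"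
      using ord
    proof (rule AE_mp, intro AE_I2 impI)
      fix \<omega> assume w: "\<omega> \<in> space M" and o: "\<forall>j\<ge>1. tauj P af lf tf j \<omega> > lamj P af lf tf j \<omega>
                          \<and> lamj P af lf tf j \<omega> \<ge> alphaj P af lf tf j \<omega>"
      show "indicator ?R \<omega> / m \<omega> = indicator ?R \<omega> / mq \<omega>"
      proof (cases "\<omega> \<in> ?R")
        case True
        then have "P t \<omega> \<le> af (hi \<omega> (t-1))" "P t \<omega> \<le> lf (hi \<omega> (t-1))" "P t \<omega> \<le> tf (hi \<omega> (t-1))"
          using o t1 unfolding alphaj_def lamj_def tauj_def by force+
        from Rset_replace_eq[where P=P and t=t and \<omega>=\<omega> and af=af and lf=lf and tf=tf and T=T, OF t1 this nn] have "m \<omega> = mq \<omega>"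
          unfolding m_def mq_def Q_def by simp
        then show ?thesis by simp
      qed simp
    qed
  qed
  also have "\<dots> = (\<Sum>i\<in>?I2. \<integral>\<omega>. indicator {\<omega>\<in>space M. \<phi> \<omega> = i} \<omega> * (indicator ?R \<omega> / mq \<omega>) \<partial>M)"
    by (rule integral_partition[OF fin2 phiI B_M int1])
  also have "\<dots> = (\<Sum>i\<in>?I2. (1 / max (real (snd i)) 1) * prob ({\<omega>\<in>space M. P t \<omega> \<le> af (fst i)} \<inter> {\<omega>\<in>space M. \<phi> \<omega> = i}))"
  proof (intro sum.cong refl integral_block Ple_sets B_M)
    fix i \<omega> assume "\<omega> \<in> {\<omega>\<in>space M. \<phi> \<omega> = i}"
    then have "hi \<omega> (t-1) = fst i" "mq \<omega> = max (real (snd i)) 1" "\<omega> \<in> space M"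
      unfolding \<phi>_def mq_def by auto
    then show "indicator ?R \<omega> / mq \<omega> = 1 / max (real (snd i)) 1 * indicator {\<omega>\<in>space M. P t \<omega> \<le> af (fst i)} \<omega>"
      by (simp add: indicator_def alphaj_def)
  qed
  also have "\<dots> \<le> (\<Sum>i\<in>?I2. (1 / max (real (snd i)) 1 * (af (fst i) / (tf (fst i) - lf (fst i)))) *
        prob ({\<omega>\<in>space M. lf (fst i) < P t \<omega> \<and> P t \<omega> \<le> tf (fst i)} \<inter> {\<omega>\<in>space M. \<phi> \<omega> = i}))"
  proof (intro sum_mono)
    fix i assume "i \<in> ?I2"
    obtain h k where i: "i = (h, k)" by (cases i)
    let ?B = "{\<omega>\<in>space M. \<phi> \<omega> = i}"
    let ?A = "{\<omega>\<in>space M. P t \<omega> \<le> af h}"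
    let ?C = "{\<omega>\<in>space M. lf h < P t \<omega> \<and> P t \<omega> \<le> tf h}"
    have pA: "prob (?A \<inter> ?B) = prob ?A * prob ?B" by (rule pr[OF A_S1 B_G])
    have pC: "prob (?C \<inter> ?B) = prob ?C * prob ?B" by (rule pr[OF C_S1 B_G])
    have key: "prob ?A * prob ?B \<le> af h / (tf h - lf h) * prob ?C * prob ?B"
    proof (cases "prob ?B = 0")
      case True
      then show ?thesis by simp
    next
      case False
      then have pB: "prob ?B > 0" using measure_nonneg[of M ?B] by linarith
      have BH: "?B \<subseteq> {\<omega>\<in>space M. hi \<omega> (t-1) = h}" unfolding \<phi>_def i by auto
      from ord_at[OF BH B_M pB t1] have o: "tf h > lf h" "lf h \<ge> af h" by auto
      let ?H = "{\<omega>\<in>space M. hi \<omega> (t-1) = h}"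
      have "prob ?B \<le> prob ?H" by (rule finite_measure_mono[OF BH hist_sets])
      with pB have pH: "prob ?H > 0" by linarith
      define F where "F v = prob {\<omega>\<in>space M. P t \<omega> \<le> v}" for v
      have cF: "F (s * x) \<le> x * F s" if "x \<in> {0..1}" "s \<in> {0..1}" for x s
      proof -
        have "F (s * x) * prob ?H \<le> (x * F s) * prob ?H"
          using cuc_at[OF t that, of h] unfolding F_def pr[OF A_S1 H_G]
          by (simp add: mult.assoc)
        then show ?thesis using pH by (rule mult_right_le_imp_le)
      qed
      have "F (af h) \<le> af h / (tf h - lf h) * (F (tf h) - F (lf h))"
        by (rule cons_ineq[OF cF]) (use o af[of h] tf[of h] in auto)
      moreover have "F (tf h) - F (lf h) = prob ?C"
      proof -
        have "?C = {\<omega>\<in>space M. P t \<omega> \<le> tf h} - {\<omega>\<in>space M. P t \<omega> \<le> lf h}" by (rule C_eq)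
        moreover have "prob ({\<omega>\<in>space M. P t \<omega> \<le> tf h} - {\<omega>\<in>space M. P t \<omega> \<le> lf h})
           = F (tf h) - F (lf h)"
          unfolding F_def by (rule finite_measure_Diff) (use o in \<open>auto intro!: Ple_sets\<close>)
        ultimately show ?thesis by simp
      qed
      ultimately have "prob ?A \<le> af h / (tf h - lf h) * prob ?C" unfolding F_def by simp
      then show ?thesis by (rule mult_right_mono) simp
    qed
    have "1 / max (real k) 1 * (prob ?A * prob ?B) \<le> 1 / max (real k) 1 * (af h / (tf h - lf h) * prob ?C * prob ?B)"
      by (rule mult_left_mono[OF key]) simp
    then show "1 / max (real (snd i)) 1 * prob ({\<omega>\<in>space M. P t \<omega> \<le> af (fst i)} \<inter> ?B)
        \<le> 1 / max (real (snd i)) 1 * (af (fst i) / (tf (fst i) - lf (fst i))) *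
          prob ({\<omega>\<in>space M. lf (fst i) < P t \<omega> \<and> P t \<omega> \<le> tf (fst i)} \<inter> ?B)"
      unfolding i fst_conv snd_conv pA[unfolded i] pC[unfolded i] by (simp add: mult_ac)
  qed
  also have "\<dots> = (\<Sum>i\<in>?I2. \<integral>\<omega>. indicator {\<omega>\<in>space M. \<phi> \<omega> = i} \<omega> * (Dj P af lf tf t \<omega> / mq \<omega>) \<partial>M)"
  proof (intro sum.cong refl integral_block[symmetric] Pint_sets B_M)
    fix i \<omega> assume "\<omega> \<in> {\<omega>\<in>space M. \<phi> \<omega> = i}"
    then have "hi \<omega> (t-1) = fst i" "mq \<omega> = max (real (snd i)) 1" "\<omega> \<in> space M"
      unfolding \<phi>_def mq_def by auto
    then show "Dj P af lf tf t \<omega> / mq \<omega> = 1 / max (real (snd i)) 1 * (af (fst i) / (tf (fst i) - lf (fst i))) *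
        indicator {\<omega>\<in>space M. lf (fst i) < P t \<omega> \<and> P t \<omega> \<le> tf (fst i)} \<omega>"
      by (simp add: indicator_def Dj_def alphaj_def lamj_def tauj_def)
  qed
  also have "\<dots> = (\<integral>\<omega>. Dj P af lf tf t \<omega> / mq \<omega> \<partial>M)"
    by (rule integral_partition[OF fin2 phiI B_M int2, symmetric])
  also have "\<dots> \<le> (\<integral>\<omega>. Dj P af lf tf t \<omega> / m \<omega> \<partial>M)"
  proof (rule integral_mono_AE[OF int2 int3])
    show "AE \<omega> in M. Dj P af lf tf t \<omega> / mq \<omega> \<le> Dj P af lf tf t \<omega> / m \<omega>"
      using ord
    proof (rule AE_mp, intro AE_I2 impI)
      fix \<omega> assume w: "\<omega> \<in> space M" and o: "\<forall>j\<ge>1. tauj P af lf tf j \<omega> > lamj P af lf tf j \<omega>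
                          \<and> lamj P af lf tf j \<omega> \<ge> alphaj P af lf tf j \<omega>"
      show "Dj P af lf tf t \<omega> / mq \<omega> \<le> Dj P af lf tf t \<omega> / m \<omega>"
      proof (cases "lamj P af lf tf t \<omega> < P t \<omega> \<and> P t \<omega> \<le> tauj P af lf tf t \<omega>")
        case True
        then have "lf (hi \<omega> (t-1)) < P t \<omega>" "P t \<omega> \<le> tf (hi \<omega> (t-1))"
          unfolding lamj_def tauj_def by auto
        from Rset_replace_le[where P=P and t=t and \<omega>=\<omega> and af=af and lf=lf and tf=tf and T=T, OF t1 this nn ma ml mt]
        have "card (Rset P af lf tf T \<omega>) \<le> card (Rset Q af lf tf T \<omega>)"
          unfolding Q_def by (intro card_mono) (auto simp: Rset_def)
        then have mm: "m \<omega> \<le> mq \<omega>" unfolding m_def mq_def by auto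
        have "Dj P af lf tf t \<omega> \<ge> 0"
          using o t1 af unfolding Dj_def alphaj_def by (auto intro!: divide_nonneg_pos)
        then show ?thesis using mm m1[of \<omega>] by (intro divide_left_mono) auto
      next
        case False
        show ?thesis unfolding Dj_def if_not_P[OF False] by simp
      qed
    qed
  qed
  finally show ?thesis unfolding m_def .
qed

lemma Djm_int: "integrable M (\<lambda>\<omega>. Dj P af lf tf t \<omega> / max (real (card (Rset P af lf tf T \<omega>))) 1)"
proof (rule integrable_const_bound[where B="\<Sum>h\<in>L (t-1). \<bar>af h / (tf h - lf h)\<bar>"])
  have "\<bar>Dj P af lf tf t \<omega> / max (real (card (Rset P af lf tf T \<omega>))) 1\<bar> \<le> (\<Sum>h\<in>L (t-1). \<bar>af h / (tf h - lf h)\<bar>)" for \<omega>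
    using abs_div_ge1[of "max (real (card (Rset P af lf tf T \<omega>))) 1" "Dj P af lf tf t \<omega>"] Dj_bound[of t \<omega>] by linarith
  then show "AE x in M. norm (Dj P af lf tf t x / max (real (card (Rset P af lf tf T x))) 1) \<le> (\<Sum>h\<in>L (t-1). \<bar>af h / (tf h - lf h)\<bar>)"
    by (intro AE_I2) simp
qed (use Dj_meas[of t] m_meas[of T] in measurable)

lemma Rm_int: "integrable M (\<lambda>\<omega>. indicator {\<omega>\<in>space M. P t \<omega> \<le> alphaj P af lf tf t \<omega>} \<omega> / max (real (card (Rset P af lf tf T \<omega>))) 1)"
proof (rule integrable_const_bound[where B=1])
  let ?R = "{\<omega>\<in>space M. P t \<omega> \<le> alphaj P af lf tf t \<omega>}"
  show "AE x in M. norm (indicator ?R x / max (real (card (Rset P af lf tf T x))) 1) \<le> (1::real)"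
  proof (intro AE_I2)
    fix x
    have "\<bar>indicator ?R x / max (real (card (Rset P af lf tf T x))) 1\<bar> \<le> \<bar>indicator ?R x\<bar>" by (rule abs_div_ge1) simp
    moreover have "\<bar>indicator ?R x\<bar> \<le> (1::real)" by (simp add: indicator_def)
    ultimately show "norm (indicator ?R x / max (real (card (Rset P af lf tf T x))) 1) \<le> (1::real)"
      unfolding real_norm_def by linarith
  qed
  have Rs: "?R \<in> sets M" using ameas[of t] Pm[of t] by measurable
  show "(\<lambda>x. indicator ?R x / max (real (card (Rset P af lf tf T x))) 1) \<in> borel_measurable M"
    using Rs m_meas[of T] by measurable
qed

lemma part_b:
  assumes ni: "nulls_indep M P H0"
    and ma: "monotone_past af" and ml: "monotone_past lf" and mt: "monotone_past (\<lambda>h. 1 - tf h)"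
    and fd: "AE \<omega> in M. \<forall>t. FDPhat_ADDIS P af lf tf t \<omega> \<le> \<alpha>" and a0: "0 \<le> \<alpha>"
  shows "FDR M P H0 af lf tf T \<le> \<alpha>"
proof -
  let ?m = "\<lambda>\<omega>. max (real (card (Rset P af lf tf T \<omega>))) 1"
  let ?R = "\<lambda>j. {\<omega>\<in>space M. P j \<omega> \<le> alphaj P af lf tf j \<omega>}"
  have "FDR M P H0 af lf tf T = (\<integral>\<omega>. (\<Sum>j\<in>H0 \<inter> {1..T}. indicator (?R j) \<omega> / ?m \<omega>) \<partial>M)"
    unfolding FDR_def
    by (rule Bochner_Integration.integral_cong[OF refl]) (simp add: card_H0R sum_divide_distrib)
  also have "\<dots> = (\<Sum>j\<in>H0 \<inter> {1..T}. (\<integral>\<omega>. indicator (?R j) \<omega> / ?m \<omega> \<partial>M))"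
    by (rule Bochner_Integration.integral_sum) (rule Rm_int)
  also have "\<dots> \<le> (\<Sum>j\<in>H0 \<inter> {1..T}. (\<integral>\<omega>. Dj P af lf tf j \<omega> / ?m \<omega> \<partial>M))"
    by (intro sum_mono core_b[OF ni _ _ ma ml mt]) auto
  also have "\<dots> \<le> (\<Sum>j\<in>{1..T}. (\<integral>\<omega>. Dj P af lf tf j \<omega> / ?m \<omega> \<partial>M))"
  proof (rule sum_mono2)
    fix j assume "j \<in> {1..T} - H0 \<inter> {1..T}"
    then have j1: "j \<ge> 1" by auto
    show "0 \<le> (\<integral>\<omega>. Dj P af lf tf j \<omega> / ?m \<omega> \<partial>M)"
      by (rule integral_nonneg_AE) (use Dj_nonneg j1 in \<open>auto elim!: AE_mp\<close>)
  qed auto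
  also have "\<dots> = (\<integral>\<omega>. (\<Sum>j\<in>{1..T}. Dj P af lf tf j \<omega> / ?m \<omega>) \<partial>M)"
    by (rule Bochner_Integration.integral_sum[symmetric]) (rule Djm_int)
  also have "\<dots> = (\<integral>\<omega>. FDPhat_ADDIS P af lf tf T \<omega> \<partial>M)"
    unfolding FDPhat_ADDIS_def Dj_def by (simp add: sum_divide_distrib)
  also have "\<dots> \<le> (\<integral>\<omega>. \<alpha> \<partial>M)"
    by (rule integral_mono_AE') (use fd a0 in \<open>auto elim!: AE_mp\<close>)
  also have "\<dots> = \<alpha>" by (simp add: prob_space)
  finally show ?thesis .
qed

end

theorem theorem1:
  fixes M :: "'a measure" and P :: "nat \<Rightarrow> 'a \<Rightarrow> real" and H0 :: "nat set"
    and \<alpha> :: real and af lf tf :: "hist \<Rightarrow> real"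
  assumes "prob_space M"
    and "\<And>j. P j \<in> borel_measurable M"
    and "H0 \<subseteq> {1..}"
    and "0 < \<alpha>" and "\<alpha> < 1"
    and "\<And>h. af h \<in> {0..1}" and "\<And>h. lf h \<in> {0..1}" and "\<And>h. tf h \<in> {0..1}"
    and "AE \<omega> in M. \<forall>j\<ge>1. tauj P af lf tf j \<omega> > lamj P af lf tf j \<omega>
                          \<and> lamj P af lf tf j \<omega> \<ge> alphaj P af lf tf j \<omega>"
    and "cond_unif_conservative M P H0 af lf tf"
    and "AE \<omega> in M. \<forall>t. FDPhat_ADDIS P af lf tf t \<omega> \<le> \<alpha>"
  shows "(\<forall>t. mFDR M P H0 af lf tf t \<le> \<alpha>) \<and>
         (nulls_indep M P H0 \<and> monotone_past af \<and> monotone_past lf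
            \<and> monotone_past (\<lambda>h. 1 - tf h)
          \<longrightarrow> (\<forall>t. FDR M P H0 af lf tf t \<le> \<alpha>))"
proof -
  interpret addis M P H0 af lf tf
    by (rule addis.intro[OF assms(1)], unfold_locales) (use assms in auto)
  show ?thesis
    using part_a[OF assms(11)] part_b[OF _ _ _ _ assms(11)] assms(4) by auto
qed

end
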